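(* Let $G=(V,E)$ be an atomic bispanning graph, $v\in V$ a vertex of degree $3$ with neighbours $x,y,z$ and incident edges $e_x,e_y,e_z$. Let $(S,T)$ be a pair of disjoint spanning trees of $G$ with $S\cup T=E$, and let $e_c$ be the attachment edge, $e_a$ the cycle edge and $e_b$ the non-cycle edge of $v$ and $(S,T)$. Then $(e_c,e_a,S,T)$ is an arc of $\vec\tau_3(G)$, i.e. $(e_c,e_a)$ is a unique edge exchange for $(S,T)$.
   Context: Graphs are finite, undirected, possibly with parallel edges, no loops. A spanning tree is $T\subseteq E$ with $(V,T)$ connected and acyclic; bispanning means $E$ is the union of two disjoint spanning trees; atomic means the only bispanning subgraphs are the graph itself and single vertices. For a spanning tree $T$ and $e\notin T$, $C_G(T,e)$ is the edge set of the unique cycle in $T\cup\{e\}$; for $e\in T$, $D_G(T,e)$ is the set of edges of $G$ with one end in each component of $(V,T\setminus\{e\})$. $(e,f,S,T)$ is an arc of $\vec\tau_3(G)$ iff either $e\in S,f\in T$ and $D_G(S,e)\cap C_G(T,e)=\{e,f\}$, or $e\in T,f\in S$ and $D_G(T,e)\cap C_G(S,e)=\{e,f\}$. Among $e_x,e_y,e_z$ exactly one lies in a different tree from the other two; it is the attachment edge $e_c$; of the other two, the one contained in the fundamental cycle $C_G(\cdot,e_c)$ of $e_c$ with respect to the tree not containing $e_c$ is the cycle edge $e_a$, the other the non-cycle edge $e_b$. *)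

theory Defs
  imports Main
begin

text \<open>Finite multigraphs without loops: vertex set V, edge set E, and an
endpoint map ends assigning each edge its 2-element set of endpoints.\<close>

definition graph :: "'v set \<Rightarrow> 'e set \<Rightarrow> ('e \<Rightarrow> 'v set) \<Rightarrow> bool" where
  "graph V E ends \<longleftrightarrow> finite V \<and> finite E \<and>
     (\<forall>e\<in>E. ends e \<subseteq> V \<and> card (ends e) = 2)"

definition reach :: "('e \<Rightarrow> 'v set) \<Rightarrow> 'e set \<Rightarrow> 'v \<Rightarrow> 'v \<Rightarrow> bool" where
  "reach ends F = (\<lambda>a b. \<exists>f\<in>F. ends f = {a, b})\<^sup>*\<^sup>*"

definition connected_on :: "'v set \<Rightarrow> ('e \<Rightarrow> 'v set) \<Rightarrow> 'e set \<Rightarrow> bool" where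
  "connected_on V ends F \<longleftrightarrow> (\<forall>a\<in>V. \<forall>b\<in>V. reach ends F a b)"

definition is_cycle :: "('e \<Rightarrow> 'v set) \<Rightarrow> 'e set \<Rightarrow> bool" where
  "is_cycle ends C \<longleftrightarrow> C \<noteq> {} \<and> finite C \<and>
     (\<forall>u\<in>\<Union>(ends ` C). card {f\<in>C. u \<in> ends f} = 2) \<and>
     connected_on (\<Union>(ends ` C)) ends C"

definition acyclic_edges :: "('e \<Rightarrow> 'v set) \<Rightarrow> 'e set \<Rightarrow> bool" where
  "acyclic_edges ends F \<longleftrightarrow> \<not> (\<exists>C\<subseteq>F. is_cycle ends C)"

definition spanning_tree :: "'v set \<Rightarrow> 'e set \<Rightarrow> ('e \<Rightarrow> 'v set) \<Rightarrow> 'e set \<Rightarrow> bool" where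
  "spanning_tree V E ends T \<longleftrightarrow> T \<subseteq> E \<and> connected_on V ends T \<and> acyclic_edges ends T"

definition bispanning :: "'v set \<Rightarrow> 'e set \<Rightarrow> ('e \<Rightarrow> 'v set) \<Rightarrow> bool" where
  "bispanning V E ends \<longleftrightarrow> (\<exists>S T. spanning_tree V E ends S \<and> spanning_tree V E ends T \<and>
      S \<inter> T = {} \<and> S \<union> T = E)"

definition atomic :: "'v set \<Rightarrow> 'e set \<Rightarrow> ('e \<Rightarrow> 'v set) \<Rightarrow> bool" where
  "atomic V E ends \<longleftrightarrow> (\<forall>V' E'. V' \<noteq> {} \<and> V' \<subseteq> V \<and> E' \<subseteq> E \<and> (\<forall>e\<in>E'. ends e \<subseteq> V') \<and>
      bispanning V' E' ends \<longrightarrow> (V' = V \<and> E' = E) \<or> (\<exists>u. V' = {u} \<and> E' = {}))"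

definition fund_cycle :: "('e \<Rightarrow> 'v set) \<Rightarrow> 'e set \<Rightarrow> 'e \<Rightarrow> 'e set" where
  "fund_cycle ends T e = (THE C. C \<subseteq> insert e T \<and> is_cycle ends C)"

definition component :: "'v set \<Rightarrow> ('e \<Rightarrow> 'v set) \<Rightarrow> 'e set \<Rightarrow> 'v \<Rightarrow> 'v set" where
  "component V ends F a = {b\<in>V. reach ends F a b}"

definition fund_cut :: "'v set \<Rightarrow> 'e set \<Rightarrow> ('e \<Rightarrow> 'v set) \<Rightarrow> 'e set \<Rightarrow> 'e \<Rightarrow> 'e set" where
  "fund_cut V E ends T e = {f\<in>E. \<exists>a b. ends f = {a, b} \<and>
      component V ends (T - {e}) a \<noteq> component V ends (T - {e}) b}"

definition tau3_arc :: "'v set \<Rightarrow> 'e set \<Rightarrow> ('e \<Rightarrow> 'v set) \<Rightarrow> 'e \<Rightarrow> 'e \<Rightarrow> 'e set \<Rightarrow> 'e set \<Rightarrow> bool" where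
  "tau3_arc V E ends e f S T \<longleftrightarrow>
     (e \<in> S \<and> f \<in> T \<and> fund_cut V E ends S e \<inter> fund_cycle ends T e = {e, f}) \<or>
     (e \<in> T \<and> f \<in> S \<and> fund_cut V E ends T e \<inter> fund_cycle ends S e = {e, f})"

end

theory Submission
  imports Defs
begin


lemma reach_refl: "reach ends F a a" by (simp add: reach_def)

lemma reach_edge: "g \<in> F \<Longrightarrow> ends g = {a,b} \<Longrightarrow> reach ends F a b"
  unfolding reach_def by (rule r_into_rtranclp) blast

lemma reach_trans: "reach ends F a b \<Longrightarrow> reach ends F b c \<Longrightarrow> reach ends F a c"
  unfolding reach_def by (rule rtranclp_trans)

lemma reach_sym: "reach ends F a b \<Longrightarrow> reach ends F b a"
  unfolding reach_def
proof (induction rule: rtranclp_induct)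
  case base then show ?case by simp
next
  case (step b c)
  then obtain g where "g \<in> F" "ends g = {c,b}" by (auto simp: insert_commute)
  then have "(\<lambda>a b. \<exists>f\<in>F. ends f = {a, b}) c b" by blast
  then show ?case using step(3) by (rule converse_rtranclp_into_rtranclp)
qed

lemma reach_mono: "reach ends F a b \<Longrightarrow> F \<subseteq> G \<Longrightarrow> reach ends G a b"
  unfolding reach_def by (erule rtranclp_mono[THEN predicate2D, rotated]) blast

lemma reach_replace:
  assumes "reach ends F a b" "ends e = {s,t}" "reach ends G s t"
  shows "reach ends ((F - {e}) \<union> G) a b"
  using assms(1) unfolding reach_def[of ends F]
proof (induction rule: rtranclp_induct)
  case base then show ?case by (rule reach_refl)
next
  case (step b c)
  then obtain g where g: "g \<in> F" "ends g = {b,c}" by auto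
  show ?case
  proof (cases "g = e")
    case True
    then have "{b,c} = {s,t}" using g assms(2) by simp
    then have "reach ends G b c" using assms(3) reach_sym[OF assms(3)] reach_refl
      by (auto simp: doubleton_eq_iff)
    then show ?thesis using step(3) reach_mono reach_trans by (metis sup_ge2)
  next
    case False
    then have "reach ends ((F - {e}) \<union> G) b c" using g by (intro reach_edge[of g]) auto
    then show ?thesis using step(3) reach_trans by metis
  qed
qed

lemma reach_walk:
  assumes "reach ends F a b"
  shows "\<exists>ps. ps \<noteq> [] \<and> hd ps = a \<and> last ps = b \<and> successively (\<lambda>p q. \<exists>g\<in>F. ends g = {p,q}) ps"
  using assms unfolding reach_def
proof (induction rule: rtranclp_induct)
  case base then show ?case by (intro exI[of _ "[a]"]) auto
next
  case (step b c)
  then obtain ps where ps: "ps \<noteq> []" "hd ps = a" "last ps = b" "successively (\<lambda>p q. \<exists>g\<in>F. ends g = {p,q}) ps" by auto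
  show ?case using ps step(2) by (intro exI[of _ "ps @ [c]"]) (auto simp: successively_append_iff)
qed

lemma walk_distinct:
  "successively P ps \<Longrightarrow> ps \<noteq> [] \<Longrightarrow> \<exists>qs. qs \<noteq> [] \<and> hd qs = hd ps \<and> last qs = last ps \<and> successively P qs \<and> distinct qs"
proof (induction "length ps" arbitrary: ps rule: less_induct)
  case less
  show ?case
  proof (cases "distinct ps")
    case True then show ?thesis using less.prems by blast
  next
    case False
    then obtain xs ys zs y where eq: "ps = xs @ [y] @ ys @ [y] @ zs" using not_distinct_decomp by blast
    define qs where "qs = xs @ [y] @ zs"
    have "length qs < length ps" using eq qs_def by simp
    moreover have "successively P qs"
    proof -
      have h: "successively P ((xs @ [y]) @ (ys @ ([y] @ zs)))" using less.prems(1) unfolding eq by simp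
      then have 1: "successively P (xs @ [y])" by (simp only: successively_append_iff)
      from h have "successively P (ys @ ([y] @ zs))" by (simp only: successively_append_iff)
      then have 2: "successively P ([y] @ zs)" by (simp only: successively_append_iff)
      have "successively P ((xs @ [y]) @ zs)"
        using 1 2 by (cases zs) (auto simp: successively_append_iff)
      then show ?thesis by (simp add: qs_def)
    qed
    moreover have "qs \<noteq> []" by (simp add: qs_def)
    moreover have "hd qs = hd ps" unfolding eq qs_def by (cases xs) auto
    moreover have "last qs = last ps" unfolding eq qs_def by (cases zs) auto
    ultimately show ?thesis using less(1)[of qs] by metis
  qed
qed



fun pedges :: "('e \<Rightarrow> 'v set) \<Rightarrow> 'e set \<Rightarrow> 'v list \<Rightarrow> 'e set" where
  "pedges ends F (p # q # rest) = insert (SOME g. g \<in> F \<and> ends g = {p,q}) (pedges ends F (q # rest))"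
| "pedges ends F _ = {}"

abbreviation adjw where "adjw ends F \<equiv> (\<lambda>p q. \<exists>g\<in>F. ends g = {p,q})"

lemma pedges_props:
  "successively (adjw ends F) ps \<Longrightarrow> pedges ends F ps \<subseteq> F \<and> finite (pedges ends F ps) \<and>
     (\<forall>g\<in>pedges ends F ps. ends g \<subseteq> set ps) \<and> (\<forall>u\<in>set ps. reach ends (pedges ends F ps) (hd ps) u)
   \<and> (length ps \<ge> 2 \<longrightarrow> \<Union>(ends ` pedges ends F ps) = set ps)"
proof (induction ends F ps rule: pedges.induct)
  case (1 ends F p q rest)
  define g where "g = (SOME g. g \<in> F \<and> ends g = {p,q})"
  have "\<exists>g. g \<in> F \<and> ends g = {p,q}" using "1.prems" by auto
  then have g: "g \<in> F" "ends g = {p,q}" unfolding g_def by (metis (mono_tags, lifting) someI_ex)+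
  have IH: "pedges ends F (q # rest) \<subseteq> F \<and> finite (pedges ends F (q # rest)) \<and>
     (\<forall>g\<in>pedges ends F (q # rest). ends g \<subseteq> set (q # rest)) \<and> (\<forall>u\<in>set (q # rest). reach ends (pedges ends F (q # rest)) q u)
   \<and> (length (q # rest) \<ge> 2 \<longrightarrow> \<Union>(ends ` pedges ends F (q # rest)) = set (q # rest))"
    using "1.IH" "1.prems" by (auto simp: successively_Cons)
  have pe: "pedges ends F (p # q # rest) = insert g (pedges ends F (q # rest))" by (simp add: g_def)
  have r1: "reach ends (insert g (pedges ends F (q # rest))) p q" using g by (intro reach_edge[of g]) auto
  have r2: "reach ends (insert g (pedges ends F (q # rest))) q u" if "u \<in> set (q # rest)" for u
    using IH that reach_mono by (metis subset_insertI)
  have r3: "reach ends (insert g (pedges ends F (q # rest))) p u" if "u \<in> set (p # q # rest)" for u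
    using that r1 r2 reach_trans reach_refl by (metis set_ConsD)
  have "\<Union>(ends ` insert g (pedges ends F (q # rest))) = set (p # q # rest)"
  proof (cases rest)
    case Nil then show ?thesis using g by simp
  next
    case (Cons a list) then show ?thesis using g IH by auto
  qed
  then show ?case unfolding pe using IH g r3 by (auto simp del: pedges.simps)
qed (auto simp: reach_refl)

lemma card_insert_filter:
  assumes "finite P" "g \<notin> P"
  shows "card {h \<in> insert g P. Q h} = card {h \<in> P. Q h} + (if Q g then 1 else 0)"
  using assms by (auto simp: insert_compr[symmetric] Collect_conj_eq)



lemma pedges_deg:
  "successively (adjw ends F) ps \<Longrightarrow> distinct ps \<Longrightarrow> length ps \<ge> 2 \<Longrightarrow>
   card {g \<in> pedges ends F ps. u \<in> ends g} = (if u \<in> set ps then (if u = hd ps \<or> u = last ps then 1 else 2) else 0)"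
proof (induction ends F ps rule: pedges.induct)
  case (1 ends F p q rest)
  obtain g where g: "g \<in> F" "ends g = {p,q}" "pedges ends F (p # q # rest) = insert g (pedges ends F (q # rest))"
  proof -
    have "\<exists>g. g \<in> F \<and> ends g = {p,q}" using "1.prems" by auto
    then show ?thesis using that by (metis (mono_tags, lifting) someI_ex pedges.simps(1))
  qed
  have P: "pedges ends F (q # rest) \<subseteq> F \<and> finite (pedges ends F (q # rest)) \<and>
     (\<forall>g\<in>pedges ends F (q # rest). ends g \<subseteq> set (q # rest))"
    using pedges_props[where ends=ends and F=F and ps="q # rest"] "1.prems" by (auto simp: successively_Cons)
  have gn: "g \<notin> pedges ends F (q # rest)" using P g "1.prems" by auto
  have c: "card {h \<in> insert g (pedges ends F (q # rest)). u \<in> ends h} =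
     card {h \<in> pedges ends F (q # rest). u \<in> ends h} + (if u \<in> ends g then 1 else 0)"
    by (rule card_insert_filter) (use P gn in auto)
  show ?case
  proof (cases rest)
    case Nil
    then show ?thesis using c g by simp
  next
    case (Cons a list)
    have IH: "card {g \<in> pedges ends F (q # rest). u \<in> ends g} = (if u \<in> set (q # rest) then (if u = q \<or> u = last (q # rest) then 1 else 2) else 0)"
      using "1.IH" "1.prems" Cons by (auto simp: successively_Cons)
    have "last (q # rest) \<noteq> q" using Cons "1.prems" by auto
    moreover have "p \<notin> set (q # rest)" "last (p # q # rest) = last (q # rest)" "p \<noteq> q"
      using "1.prems" Cons by auto
    ultimately show ?thesis unfolding g(3) c IH using g(2)
      by (cases "u = p"; cases "u = q") simp_all
  qed
qed auto

lemma lemmaB: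
  assumes "f \<in> F" "ends f = {a,b}" "a \<noteq> b" "reach ends (F - {f}) a b"
  shows "\<exists>C\<subseteq>F. is_cycle ends C \<and> f \<in> C"
proof -
  obtain ps0 where "ps0 \<noteq> []" "hd ps0 = a" "last ps0 = b" "successively (adjw ends (F - {f})) ps0"
    using reach_walk[OF assms(4)] by blast
  then obtain ps where ps: "ps \<noteq> []" "hd ps = a" "last ps = b" "successively (adjw ends (F - {f})) ps" "distinct ps"
    using walk_distinct[of "adjw ends (F - {f})" ps0] by auto
  have len: "length ps \<ge> 2"
  proof (rule ccontr)
    assume "\<not> length ps \<ge> 2"
    then obtain x where "ps = [x]" using ps(1) by (cases ps) (auto simp: Suc_le_eq)
    then show False using ps assms(3) by simp
  qed
  define P where "P = pedges ends (F - {f}) ps"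
  have Pp: "P \<subseteq> F - {f}" "finite P" "\<forall>u\<in>set ps. reach ends P a u" "\<Union>(ends ` P) = set ps"
    using pedges_props[OF ps(4)] len ps(2) unfolding P_def by auto
  have ab: "a \<in> set ps" "b \<in> set ps" using ps(1-3) by auto
  define C where "C = insert f P"
  have U: "\<Union>(ends ` C) = set ps" using Pp ab assms(2) by (auto simp: C_def)
  have deg: "card {g\<in>C. u \<in> ends g} = 2" if "u \<in> set ps" for u
  proof -
    have "card {g\<in>C. u \<in> ends g} = card {g\<in>P. u \<in> ends g} + (if u \<in> ends f then 1 else 0)"
      unfolding C_def by (rule card_insert_filter) (use Pp in auto)
    also have "card {g\<in>P. u \<in> ends g} = (if u \<in> set ps then (if u = a \<or> u = b then 1 else 2) else 0)"
      unfolding P_def using pedges_deg[OF ps(4) ps(5) len] ps by simp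
    finally show ?thesis using that assms(2) by auto
  qed
  have conn: "connected_on (\<Union>(ends ` C)) ends C"
    unfolding connected_on_def U
  proof (intro ballI)
    fix u w assume "u \<in> set ps" "w \<in> set ps"
    then have "reach ends P a u" "reach ends P a w" using Pp(3) by auto
    then have "reach ends P u w" using reach_sym[of ends P a u] reach_trans[of ends P u a w] by blast
    then show "reach ends C u w" using reach_mono[of ends P u w C] by (auto simp: C_def)
  qed
  have "is_cycle ends C" unfolding is_cycle_def using conn deg U Pp(2) by (auto simp: C_def)
  moreover have "C \<subseteq> F" using Pp assms(1) by (auto simp: C_def)
  ultimately show ?thesis unfolding C_def by blast
qed



lemma double_count:
  assumes "finite K" "finite D"
  shows "(\<Sum>u\<in>K. card {g\<in>D. R u g}) = (\<Sum>g\<in>D. card {u\<in>K. R u g})"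
proof -
  have 1: "card {g\<in>D. R u g} = (\<Sum>g\<in>D. if R u g then 1 else 0)" for u
    using assms(2) by (simp add: sum.If_cases Int_def)
  have 2: "card {u\<in>K. R u g} = (\<Sum>u\<in>K. if R u g then 1 else 0)" for g
    using assms(1) by (simp add: sum.If_cases Int_def)
  show ?thesis unfolding 1 2 by (rule sum.swap)
qed

lemma lemmaA:
  assumes cyc: "is_cycle ends C" and two: "\<forall>g\<in>C. card (ends g) = 2" and f: "f \<in> C" "ends f = {a,b}"
  shows "reach ends (C - {f}) a b"
proof (rule ccontr)
  assume nr: "\<not> reach ends (C - {f}) a b"
  define D where "D = C - {f}"
  define U where "U = \<Union>(ends ` C)"
  have finC: "finite C" using cyc by (simp add: is_cycle_def)
  have finU: "finite U" unfolding U_def using finC two by (auto intro: card_ge_0_finite)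
  have degC: "card {g\<in>C. u \<in> ends g} = 2" if "u \<in> U" for u
    using cyc that unfolding is_cycle_def U_def by blast
  define K where "K = {u\<in>U. reach ends D a u}"
  have aK: "a \<in> K" using f by (auto simp: K_def U_def reach_refl)
  have bK: "b \<notin> K" using nr by (simp add: K_def D_def)
  have finK: "finite K" using finU by (simp add: K_def)
  have finD: "finite D" using finC by (simp add: D_def)
  define DK where "DK = {g\<in>D. ends g \<subseteq> K}"
  have finDK: "finite DK" using finD by (simp add: DK_def)
  have same: "{g\<in>D. u \<in> ends g} = {g\<in>DK. u \<in> ends g}" if "u \<in> K" for u
  proof -
    have "ends g \<subseteq> K" if "g \<in> D" "u \<in> ends g" for g
    proof
      fix w assume w: "w \<in> ends g"
      obtain p q where pq: "ends g = {p,q}" using two \<open>g \<in> D\<close> unfolding D_def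
        by (auto simp: card_2_iff)
      have "ends g = {u, w} \<or> u = w" using pq w \<open>u \<in> ends g\<close> by auto
      then have "reach ends D u w" using reach_edge[OF \<open>g \<in> D\<close>, of ends u w] reach_refl[of ends D u] by auto
      moreover have "reach ends D a u" using \<open>u \<in> K\<close> by (simp add: K_def)
      moreover have "w \<in> U" using w \<open>g \<in> D\<close> by (auto simp: U_def D_def)
      ultimately show "w \<in> K" using reach_trans[of ends D a u w] unfolding K_def by blast
    qed
    then show ?thesis unfolding DK_def by blast
  qed
  have degD: "card {g\<in>D. u \<in> ends g} = (if u = a then 1 else 2)" if "u \<in> K" for u
  proof -
    have uU: "u \<in> U" using that by (simp add: K_def)
    have "card {g\<in>C. u \<in> ends g} = card {g\<in>D. u \<in> ends g} + (if u \<in> ends f then 1 else 0)"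
    proof -
      have "C = insert f D" using f by (auto simp: D_def)
      moreover have "f \<notin> D" by (simp add: D_def)
      ultimately show ?thesis using card_insert_filter[of D f "\<lambda>g. u \<in> ends g"] finD by simp
    qed
    moreover have "u \<in> ends f \<longleftrightarrow> u = a" using f bK that by auto
    ultimately show ?thesis using degC[OF uU] by auto
  qed
  have "(\<Sum>u\<in>K. card {g\<in>D. u \<in> ends g}) = (\<Sum>u\<in>K. card {g\<in>DK. u \<in> ends g})"
    using same by (intro sum.cong) auto
  also have "\<dots> = (\<Sum>g\<in>DK. card {u\<in>K. u \<in> ends g})" by (rule double_count[OF finK finDK])
  also have "\<dots> = (\<Sum>g\<in>DK. 2)"
  proof (rule sum.cong[OF refl])
    fix g assume "g \<in> DK"
    then have "{u\<in>K. u \<in> ends g} = ends g" "card (ends g) = 2" using two by (auto simp: DK_def D_def)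
    then show "card {u\<in>K. u \<in> ends g} = 2" by simp
  qed
  finally have eq1: "(\<Sum>u\<in>K. card {g\<in>D. u \<in> ends g}) = 2 * card DK" by simp
  have "(\<Sum>u\<in>K. card {g\<in>D. u \<in> ends g}) = (\<Sum>u\<in>K. if u = a then 1 else (2::nat))"
    using degD by (intro sum.cong) auto
  also have "\<dots> = 1 + (\<Sum>u\<in>K - {a}. if u = a then 1 else (2::nat))"
    using sum.remove[OF finK aK, of "\<lambda>u. if u = a then 1 else (2::nat)"] by simp
  also have "(\<Sum>u\<in>K - {a}. if u = a then 1 else 2) = (\<Sum>u\<in>K - {a}. (2::nat))"
    by (intro sum.cong) auto
  finally have "(\<Sum>u\<in>K. card {g\<in>D. u \<in> ends g}) = 1 + 2 * card (K - {a})" by simp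
  with eq1 show False by presburger
qed



lemma cycle_unique_aux:
  assumes acyc: "acyclic_edges ends T" and two: "\<forall>g\<in>insert e T. card (ends g) = 2"
    and es: "ends e = {s,t}"
    and C1: "C1 \<subseteq> insert e T" "is_cycle ends C1" and C2: "C2 \<subseteq> insert e T" "is_cycle ends C2"
    and f: "f \<in> C1" "f \<notin> C2"
  shows False
proof -
  have eC: "e \<in> C" if "C \<subseteq> insert e T" "is_cycle ends C" for C
    using that acyc unfolding acyclic_edges_def by blast
  have e1: "e \<in> C1" and e2: "e \<in> C2" using eC C1 C2 by auto
  have fe: "f \<noteq> e" using f e2 by auto
  have fT: "f \<in> T" using f C1 fe by auto
  obtain p q where pq: "ends f = {p,q}" "p \<noteq> q" using two fT by (auto simp: card_2_iff)
  have two1: "\<forall>g\<in>C1. card (ends g) = 2" using two C1 by auto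
  have two2: "\<forall>g\<in>C2. card (ends g) = 2" using two C2 by auto
  have r1: "reach ends (C1 - {f}) p q" by (rule lemmaA[OF C1(2) two1 f(1) pq(1)])
  have r2: "reach ends (C2 - {e}) s t" by (rule lemmaA[OF C2(2) two2 e2 es])
  have r3: "reach ends ((C1 - {f}) - {e} \<union> (C2 - {e})) p q" by (rule reach_replace[OF r1 es r2])
  define H where "H = (C1 \<union> C2) - {e}"
  have "(C1 - {f}) - {e} \<union> (C2 - {e}) \<subseteq> H - {f}" using f by (auto simp: H_def)
  then have r4: "reach ends (H - {f}) p q" using reach_mono[OF r3] by blast
  have fH: "f \<in> H" using f fe by (auto simp: H_def)
  obtain C where "C \<subseteq> H" "is_cycle ends C" using lemmaB[OF fH pq(1) pq(2) r4] by blast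
  moreover have "H \<subseteq> T" using C1 C2 by (auto simp: H_def)
  ultimately show False using acyc unfolding acyclic_edges_def by blast
qed

lemma fund_cycle_props:
  assumes acyc: "acyclic_edges ends T" and two: "\<forall>g\<in>insert e T. card (ends g) = 2"
    and eT: "e \<notin> T" and es: "ends e = {s,t}" and r: "reach ends T s t"
  shows "fund_cycle ends T e \<subseteq> insert e T \<and> is_cycle ends (fund_cycle ends T e)"
proof -
  have st: "s \<noteq> t" using two es by auto
  have "insert e T - {e} = T" using eT by auto
  then obtain C0 where C0: "C0 \<subseteq> insert e T" "is_cycle ends C0"
    using lemmaB[of e "insert e T" ends s t] es st r by auto
  have uniq: "C = C0" if "C \<subseteq> insert e T" "is_cycle ends C" for C
  proof (rule ccontr)
    assume "C \<noteq> C0"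
    then obtain f where "(f \<in> C \<and> f \<notin> C0) \<or> (f \<in> C0 \<and> f \<notin> C)" by blast
    then show False
      using cycle_unique_aux[OF acyc two es that C0] cycle_unique_aux[OF acyc two es C0 that] by blast
  qed
  have "\<exists>!C. C \<subseteq> insert e T \<and> is_cycle ends C" using C0 uniq by blast
  then show ?thesis unfolding fund_cycle_def by (rule theI')
qed

lemma shortcut:
  assumes only: "\<forall>g\<in>F. v \<in> ends g \<longrightarrow> g = e" and ew: "ends e = {v,w}"
    and two: "\<forall>g\<in>F. card (ends g) = 2" and r: "reach ends F a b" and av: "a \<noteq> v"
  shows "(b \<noteq> v \<longrightarrow> reach ends (F - {e}) a b) \<and> (b = v \<longrightarrow> reach ends (F - {e}) a w)"
  using r unfolding reach_def[of ends F]
proof (induction rule: rtranclp_induct)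
  case base then show ?case using av by (simp add: reach_refl)
next
  case (step b c)
  then obtain g where g: "g \<in> F" "ends g = {b,c}" by auto
  have bc: "b \<noteq> c" using two g by auto
  show ?case
  proof (cases "c = v")
    case True
    then have "g = e" using only g by auto
    then have "b = w" using g ew bc True by (auto simp: doubleton_eq_iff)
    then show ?thesis using step(3) True bc by auto
  next
    case cv: False
    show ?thesis
    proof (cases "b = v")
      case True
      then have "g = e" using only g by auto
      then have "c = w" using g ew bc True by (auto simp: doubleton_eq_iff)
      then show ?thesis using step(3) True cv by auto
    next
      case False
      then have "g \<noteq> e" using g cv ew by auto
      then have "reach ends (F - {e}) b c" using g by (intro reach_edge[of g]) auto
      then show ?thesis using step(3) False cv reach_trans by metis
    qed
  qed
qed

lemma noreach:
  assumes "\<forall>g\<in>F. v \<notin> ends g" "reach ends F v w"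
  shows "w = v"
  using assms(2) unfolding reach_def
proof (induction rule: rtranclp_induct)
  case base then show ?case by simp
next
  case (step b c)
  then show ?case using assms(1) by auto
qed



lemma main_aux:
  assumes G: "graph V E ends" and vV: "v \<in> V"
    and inc: "{f\<in>E. v \<in> ends f} = {ec, ea, eb}"
    and A: "spanning_tree V E ends A" and B: "spanning_tree V E ends B"
    and AB: "A \<inter> B = {}" "A \<union> B = E"
    and ecA: "ec \<in> A" and eaB: "ea \<in> B" and ebB: "eb \<in> B"
    and eaC: "ea \<in> fund_cycle ends B ec"
  shows "fund_cut V E ends A ec \<inter> fund_cycle ends B ec = {ec, ea}"
proof -
  have two: "\<forall>g\<in>E. card (ends g) = 2" and sub: "\<forall>g\<in>E. ends g \<subseteq> V"
    using G by (auto simp: graph_def)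
  have ecE: "ec \<in> E" and eaE: "ea \<in> E" using ecA eaB AB by auto
  have vec: "v \<in> ends ec" using inc by blast
  have vea: "v \<in> ends ea" using inc by blast
  have neq: "ec \<noteq> ea" using ecA eaB AB by auto
  obtain w where w: "ends ec = {v, w}" "w \<noteq> v"
  proof -
    obtain p q where "ends ec = {p,q}" "p \<noteq> q" using two ecE by (auto simp: card_2_iff)
    then show ?thesis using that vec by (auto simp: insert_commute)
  qed
  have wV: "w \<in> V" using sub ecE w by auto
  have ecB: "ec \<notin> B" using ecA AB by auto
  have Bsp: "B \<subseteq> E" "connected_on V ends B" "acyclic_edges ends B" using B by (auto simp: spanning_tree_def)
  have Asp: "A \<subseteq> E" "connected_on V ends A" "acyclic_edges ends A" using A by (auto simp: spanning_tree_def)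
  have rvw: "reach ends B v w" using Bsp(2) vV wV by (simp add: connected_on_def)
  define C where "C = fund_cycle ends B ec"
  have CP: "C \<subseteq> insert ec B" "is_cycle ends C"
    using fund_cycle_props[OF Bsp(3) _ ecB w(1) rvw] two Bsp(1) ecE unfolding C_def by auto
  have ecC: "ec \<in> C"
  proof (rule ccontr)
    assume "ec \<notin> C"
    then have "C \<subseteq> B" using CP by auto
    then show False using CP Bsp(3) unfolding acyclic_edges_def by blast
  qed
  have CE: "C \<subseteq> E" using CP Bsp ecE by auto
  have finC: "finite C" using CP by (simp add: is_cycle_def)
  have degv: "card {g\<in>C. v \<in> ends g} = 2"
    using CP(2) ecC vec unfolding is_cycle_def by blast
  have Cv: "{g\<in>C. v \<in> ends g} = {ec, ea}"
  proof -
    have "{ec, ea} \<subseteq> {g\<in>C. v \<in> ends g}" using ecC eaC vec vea by (auto simp: C_def)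
    moreover have "card {ec, ea} = 2" using neq by simp
    moreover have "finite {g\<in>C. v \<in> ends g}" using finC by simp
    ultimately show ?thesis using degv card_subset_eq[of "{g\<in>C. v \<in> ends g}" "{ec, ea}"] by simp
  qed
  define A' where "A' = A - {ec}"
  have onlyA: "\<forall>g\<in>A. v \<in> ends g \<longrightarrow> g = ec"
  proof (intro ballI impI)
    fix g assume "g \<in> A" "v \<in> ends g"
    then have "g \<in> {ec, ea, eb}" using inc Asp(1) by blast
    then show "g = ec" using \<open>g \<in> A\<close> eaB ebB AB by auto
  qed
  have noA': "\<forall>g\<in>A'. v \<notin> ends g" using onlyA by (auto simp: A'_def)
  have claim1: "h \<in> fund_cut V E ends A ec" if hE: "h \<in> E" and hv: "v \<in> ends h" for h
  proof -
    obtain u where u: "ends h = {v, u}" "u \<noteq> v"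
    proof -
      obtain p q where pq: "ends h = {p,q}" "p \<noteq> q" using two hE by (auto simp: card_2_iff)
      show ?thesis
      proof (cases "p = v")
        case True then show ?thesis using pq that[of q] by simp
      next
        case False then have "q = v" using pq hv by auto
        then show ?thesis using pq that[of p] by (simp add: insert_commute)
      qed
    qed
    have uV: "u \<in> V" using sub hE u by auto
    have "u \<in> component V ends A' u" using uV by (simp add: component_def reach_refl)
    moreover have "u \<notin> component V ends A' v"
      using noreach[OF noA'] u(2) by (auto simp: component_def)
    ultimately have "component V ends (A - {ec}) v \<noteq> component V ends (A - {ec}) u"
      by (auto simp: A'_def)
    then show ?thesis using hE u unfolding fund_cut_def by blast
  qed
  have claim2: "h \<notin> fund_cut V E ends A ec" if "h \<in> C" "v \<notin> ends h" for h
  proof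
    assume "h \<in> fund_cut V E ends A ec"
    then obtain a b where ab: "ends h = {a,b}" "component V ends A' a \<noteq> component V ends A' b"
      unfolding fund_cut_def A'_def by blast
    have hE: "h \<in> E" using that CE by auto
    have abV: "a \<in> V" "b \<in> V" using sub hE ab by auto
    have abv: "a \<noteq> v" "b \<noteq> v" using ab that by auto
    have "reach ends A a b" using Asp(2) abV by (simp add: connected_on_def)
    moreover have "\<forall>g\<in>A. card (ends g) = 2" using two Asp(1) by blast
    ultimately have "(b \<noteq> v \<longrightarrow> reach ends (A - {ec}) a b) \<and> (b = v \<longrightarrow> reach ends (A - {ec}) a w)"
      using shortcut[OF onlyA w(1) _ _ abv(1)] by blast
    then have rab: "reach ends A' a b" using abv(2) by (simp add: A'_def)
    have rba: "reach ends A' b a" using reach_sym[OF rab] .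
    have "component V ends A' a = component V ends A' b"
      unfolding component_def by (rule Collect_cong) (meson rab rba reach_trans)
    then show False using ab by simp
  qed
  show ?thesis
  proof
    show "fund_cut V E ends A ec \<inter> fund_cycle ends B ec \<subseteq> {ec, ea}"
    proof
      fix h assume h: "h \<in> fund_cut V E ends A ec \<inter> fund_cycle ends B ec"
      then have hC: "h \<in> C" by (simp add: C_def)
      show "h \<in> {ec, ea}"
      proof (cases "v \<in> ends h")
        case True then show ?thesis using hC Cv by blast
      next
        case False then show ?thesis using claim2 hC h by blast
      qed
    qed
  next
    show "{ec, ea} \<subseteq> fund_cut V E ends A ec \<inter> fund_cycle ends B ec"
      using claim1[OF ecE vec] claim1[OF eaE vea] ecC eaC by (auto simp: C_def)
  qed
qed



theorem mainTheorem16: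
  fixes V :: "'v set" and E :: "'e set" and ends :: "'e \<Rightarrow> 'v set"
    and v x y z :: 'v and ex ey ez ec ea eb :: 'e and S T :: "'e set"
  assumes "graph V E ends"
    and "bispanning V E ends"
    and "atomic V E ends"
    and "v \<in> V"
    and "{f\<in>E. v \<in> ends f} = {ex, ey, ez}"
    and "ex \<noteq> ey" "ex \<noteq> ez" "ey \<noteq> ez"
    and "ends ex = {v, x}" "ends ey = {v, y}" "ends ez = {v, z}"
    and "spanning_tree V E ends S" "spanning_tree V E ends T"
    and "S \<inter> T = {}" "S \<union> T = E"
    and "{ec, ea, eb} = {ex, ey, ez}"
    and "(ec \<in> S \<and> ea \<in> T \<and> eb \<in> T) \<or> (ec \<in> T \<and> ea \<in> S \<and> eb \<in> S)"
    and "ea \<in> fund_cycle ends (if ec \<in> S then T else S) ec"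
  shows "tau3_arc V E ends ec ea S T"
proof -
  have inc: "{f\<in>E. v \<in> ends f} = {ec, ea, eb}" using assms(5,16) by simp
  from assms(17) show ?thesis
  proof
    assume h: "ec \<in> S \<and> ea \<in> T \<and> eb \<in> T"
    then have "ea \<in> fund_cycle ends T ec" using assms(18) by simp
    then have "fund_cut V E ends S ec \<inter> fund_cycle ends T ec = {ec, ea}"
      using main_aux[OF assms(1,4) inc assms(12,13,14,15)] h by blast
    then show ?thesis using h unfolding tau3_arc_def by blast
  next
    assume h: "ec \<in> T \<and> ea \<in> S \<and> eb \<in> S"
    then have "ec \<notin> S" using assms(14) by blast
    then have "ea \<in> fund_cycle ends S ec" using assms(18) by simp
    moreover have "T \<inter> S = {}" "T \<union> S = E" using assms(14,15) by blast+
    ultimately have "fund_cut V E ends T ec \<inter> fund_cycle ends S ec = {ec, ea}"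
      using main_aux[OF assms(1,4) inc assms(13,12)] h by blast
    then show ?thesis using h unfolding tau3_arc_def by blast
  qed
qed

end
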